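(* Let $(\mathsf P,\mathcal O)$ be a semitopology and $p\in\mathsf P$. Then: (1) $p$ is regular if and only if $p$ is weakly regular and strongly compatible; (2) every point of $\mathsf P$ is regular if and only if every point of $\mathsf P$ is weakly regular and the semiframe $(\mathcal O,\subseteq,\between)$ is strongly compatible.
   Context: A semitopology is a pair $(\mathsf P,\mathcal O)$ where $\mathcal O\subseteq\mathcal P(\mathsf P)$ contains $\varnothing,\mathsf P$ and is closed under arbitrary unions. Write $O\between O'$ when $O\cap O'\neq\varnothing$. $T$ is topen when nonempty, open, and for all open $O,O'$, $O\between T\between O'$ implies $O\between O'$. Points are intertwined when every open containing one meets every open containing the other; $I(p)$ is the set of points intertwined with $p$; $K(p)$ is the union of all open subsets of $I(p)$. $p$ is regular when $p\in K(p)$ and $K(p)$ is topen; weakly regular when $p\in K(p)$. $\mathrm{nbhd}(p)=\{O\in\mathcal O\mid p\in O\}$. For $F\subseteq\mathcal O$, $F^\ast=\{O'\in\mathcal O\mid O'\between O\text{ for all }O\in F\}$; $F$ is strongly compatible when $F^\ast$ is nonempty and its elements pairwise intersect. A point $p$ is strongly compatible when $\mathrm{nbhd}(p)$ is strongly compatible. An abstract point of $(\mathcal O,\subseteq,\between)$ is a nonempty, up-closed (under $\subseteq$ within $\mathcal O$), pairwise-intersecting set $F\subseteq\mathcal O$ that is completely prime: if $\bigcup\mathcal Y\in F$ for $\mathcal Y\subseteq\mathcal O$ (possibly empty) then some element of $\mathcal Y$ is in $F$. The semiframe $(\mathcal O,\subseteq,\between)$ is strongly compatible when every abstract point of it is strongly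 compatible. *)

theory Defs
  imports Main
begin

definition semitopology :: "'a set \<Rightarrow> 'a set set \<Rightarrow> bool" where
  "semitopology P Opens \<longleftrightarrow> Opens \<subseteq> Pow P \<and> {} \<in> Opens \<and> P \<in> Opens \<and>
     (\<forall>X. X \<subseteq> Opens \<longrightarrow> \<Union>X \<in> Opens)"

definition betw :: "'a set \<Rightarrow> 'a set \<Rightarrow> bool" where
  "betw A B \<longleftrightarrow> A \<inter> B \<noteq> {}"

definition topen :: "'a set set \<Rightarrow> 'a set \<Rightarrow> bool" where
  "topen Opens T \<longleftrightarrow> T \<noteq> {} \<and> T \<in> Opens \<and>
     (\<forall>O1\<in>Opens. \<forall>O2\<in>Opens. betw O1 T \<and> betw T O2 \<longrightarrow> betw O1 O2)"

definition intertwined :: "'a set set \<Rightarrow> 'a \<Rightarrow> 'a \<Rightarrow> bool" where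
  "intertwined Opens p q \<longleftrightarrow>
     (\<forall>O1\<in>Opens. \<forall>O2\<in>Opens. p \<in> O1 \<and> q \<in> O2 \<longrightarrow> betw O1 O2)"

definition intertwined_set :: "'a set \<Rightarrow> 'a set set \<Rightarrow> 'a \<Rightarrow> 'a set" where
  "intertwined_set P Opens p = {q \<in> P. intertwined Opens p q}"

definition community :: "'a set \<Rightarrow> 'a set set \<Rightarrow> 'a \<Rightarrow> 'a set" where
  "community P Opens p = \<Union>{O1 \<in> Opens. O1 \<subseteq> intertwined_set P Opens p}"

definition regular_pt :: "'a set \<Rightarrow> 'a set set \<Rightarrow> 'a \<Rightarrow> bool" where
  "regular_pt P Opens p \<longleftrightarrow> p \<in> community P Opens p \<and> topen Opens (community P Opens p)"

definition weakly_regular_pt :: "'a set \<Rightarrow> 'a set set \<Rightarrow> 'a \<Rightarrow> bool" where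
  "weakly_regular_pt P Opens p \<longleftrightarrow> p \<in> community P Opens p"

definition nbhd :: "'a set set \<Rightarrow> 'a \<Rightarrow> 'a set set" where
  "nbhd Opens p = {O1 \<in> Opens. p \<in> O1}"

definition star :: "'a set set \<Rightarrow> 'a set set \<Rightarrow> 'a set set" where
  "star Opens F = {O' \<in> Opens. \<forall>O1\<in>F. betw O' O1}"

definition strongly_compatible_set :: "'a set set \<Rightarrow> 'a set set \<Rightarrow> bool" where
  "strongly_compatible_set Opens F \<longleftrightarrow> star Opens F \<noteq> {} \<and>
     (\<forall>A\<in>star Opens F. \<forall>B\<in>star Opens F. betw A B)"

definition strongly_compatible_pt :: "'a set set \<Rightarrow> 'a \<Rightarrow> bool" where
  "strongly_compatible_pt Opens p \<longleftrightarrow> strongly_compatible_set Opens (nbhd Opens p)"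

definition abstract_point :: "'a set set \<Rightarrow> 'a set set \<Rightarrow> bool" where
  "abstract_point Opens F \<longleftrightarrow> F \<subseteq> Opens \<and> F \<noteq> {} \<and>
     (\<forall>A\<in>F. \<forall>B\<in>Opens. A \<subseteq> B \<longrightarrow> B \<in> F) \<and>
     (\<forall>A\<in>F. \<forall>B\<in>F. betw A B) \<and>
     (\<forall>Y. Y \<subseteq> Opens \<and> \<Union>Y \<in> F \<longrightarrow> (\<exists>A\<in>Y. A \<in> F))"

definition strongly_compatible_semiframe :: "'a set set \<Rightarrow> bool" where
  "strongly_compatible_semiframe Opens \<longleftrightarrow>
     (\<forall>F. abstract_point Opens F \<longrightarrow> strongly_compatible_set Opens F)"

end

theory Submission
  imports Defs
begin

lemma community_open:
  assumes "semitopology P Opens"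
  shows "community P Opens p \<in> Opens"
  using assms unfolding semitopology_def community_def by auto

lemma topen_from_star:
  assumes st: "semitopology P Opens" and K: "K \<in> Opens" "K \<noteq> {}"
    and pw: "\<And>A B. A \<in> Opens \<Longrightarrow> B \<in> Opens \<Longrightarrow> betw A K \<Longrightarrow> betw B K \<Longrightarrow> betw A B"
  shows "topen Opens K"
  using K pw unfolding topen_def betw_def by (metis inf_commute)

lemma reg_imp_sc:
  assumes st: "semitopology P Opens" and r: "regular_pt P Opens p" and p: "p \<in> P"
  shows "strongly_compatible_pt Opens p"
proof -
  let ?K = "community P Opens p"
  have pK: "p \<in> ?K" and tK: "topen Opens ?K" using r unfolding regular_pt_def by auto
  have KO: "?K \<in> Opens" using community_open[OF st] .
  have PO: "P \<in> Opens" using st unfolding semitopology_def by auto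
  have "P \<in> star Opens (nbhd Opens p)"
    using PO st unfolding star_def nbhd_def betw_def semitopology_def by auto
  moreover have "betw A B" if "A \<in> star Opens (nbhd Opens p)" "B \<in> star Opens (nbhd Opens p)" for A B
  proof -
    have "?K \<in> nbhd Opens p" using KO pK unfolding nbhd_def by auto
    hence "betw A ?K" "betw ?K B" "A \<in> Opens" "B \<in> Opens" using that unfolding star_def betw_def by auto
    thus ?thesis using tK unfolding topen_def by blast
  qed
  ultimately show ?thesis unfolding strongly_compatible_pt_def strongly_compatible_set_def by blast
qed

lemma wr_sc_imp_reg:
  assumes st: "semitopology P Opens" and w: "weakly_regular_pt P Opens p"
    and sc: "strongly_compatible_pt Opens p"
  shows "regular_pt P Opens p"
proof -
  let ?K = "community P Opens p"
  have pK: "p \<in> ?K" using w unfolding weakly_regular_pt_def .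
  have KO: "?K \<in> Opens" using community_open[OF st] .
  have instar: "A \<in> star Opens (nbhd Opens p)" if AO: "A \<in> Opens" and AK: "betw A ?K" for A
  proof -
    obtain q where q: "q \<in> A" "q \<in> ?K" using AK unfolding betw_def by blast
    then have "intertwined Opens p q" unfolding community_def intertwined_set_def by auto
    then have "betw A U" if "U \<in> nbhd Opens p" for U
      using q(1) that \<open>A \<in> Opens\<close> unfolding intertwined_def nbhd_def betw_def by blast
    thus ?thesis using AO unfolding star_def by auto
  qed
  have "topen Opens ?K"
    unfolding topen_def
  proof (intro conjI ballI impI)
    show "?K \<noteq> {}" using pK by auto
    show "?K \<in> Opens" by fact
    fix O1 O2 assume "O1 \<in> Opens" "O2 \<in> Opens" "betw O1 ?K \<and> betw ?K O2"
    then have "O1 \<in> star Opens (nbhd Opens p)" "O2 \<in> star Opens (nbhd Opens p)"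
      using instar unfolding betw_def by (auto simp: inf_commute)
    thus "betw O1 O2" using sc unfolding strongly_compatible_pt_def strongly_compatible_set_def by blast
  qed
  thus ?thesis using pK unfolding regular_pt_def by auto
qed

lemma nbhd_abstract:
  assumes st: "semitopology P Opens" and p: "p \<in> P"
  shows "abstract_point Opens (nbhd Opens p)"
  using st p unfolding abstract_point_def nbhd_def semitopology_def betw_def by blast

lemma all_reg_sc:
  assumes st: "semitopology P Opens" and r: "\<forall>p\<in>P. regular_pt P Opens p"
  shows "strongly_compatible_semiframe Opens"
  unfolding strongly_compatible_semiframe_def
proof (intro allI impI)
  fix F assume F: "abstract_point Opens F"
  have PO: "P \<in> Opens" and sub: "Opens \<subseteq> Pow P" using st unfolding semitopology_def by auto
  obtain A where A: "A \<in> F" using F unfolding abstract_point_def by auto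
  have "A \<subseteq> P" using A F sub unfolding abstract_point_def by auto
  hence PF: "P \<in> F" using A PO F unfolding abstract_point_def by blast
  let ?Y = "(\<lambda>q. community P Opens q) ` P"
  have "\<Union>?Y = P"
  proof
    show "\<Union>?Y \<subseteq> P" unfolding community_def intertwined_set_def by auto
    show "P \<subseteq> \<Union>?Y" using r unfolding regular_pt_def by auto
  qed
  moreover have "?Y \<subseteq> Opens" using community_open[OF st] by auto
  ultimately obtain q where q: "q \<in> P" "community P Opens q \<in> F"
    using F PF unfolding abstract_point_def by (metis imageE)
  have tK: "topen Opens (community P Opens q)" using r q unfolding regular_pt_def by auto
  have "P \<in> star Opens F"
  proof -
    have "betw P B" if "B \<in> F" for B
    proof -
      have "betw B B" using that F unfolding abstract_point_def by blast
      moreover have "B \<subseteq> P" using that F sub unfolding abstract_point_def by auto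
      ultimately show ?thesis unfolding betw_def by auto
    qed
    thus ?thesis using PO unfolding star_def by auto
  qed
  moreover have "betw A B" if "A \<in> star Opens F" "B \<in> star Opens F" for A B
  proof -
    have "betw A (community P Opens q)" "betw (community P Opens q) B" "A \<in> Opens" "B \<in> Opens"
      using that q unfolding star_def betw_def by auto
    thus ?thesis using tK unfolding topen_def by blast
  qed
  ultimately show "strongly_compatible_set Opens F" unfolding strongly_compatible_set_def by blast
qed

theorem corollary9p51:
  assumes "semitopology P Opens"
  shows "(\<forall>p\<in>P. regular_pt P Opens p \<longleftrightarrow>
            weakly_regular_pt P Opens p \<and> strongly_compatible_pt Opens p)
    \<and> ((\<forall>p\<in>P. regular_pt P Opens p) \<longleftrightarrow>
         (\<forall>p\<in>P. weakly_regular_pt P Opens p) \<and> strongly_compatible_semiframe Opens)"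
proof -
  have one: "\<forall>p\<in>P. regular_pt P Opens p \<longleftrightarrow>
            weakly_regular_pt P Opens p \<and> strongly_compatible_pt Opens p"
    using reg_imp_sc[OF assms] wr_sc_imp_reg[OF assms]
    unfolding regular_pt_def weakly_regular_pt_def by blast
  have "(\<forall>p\<in>P. regular_pt P Opens p) \<Longrightarrow>
         (\<forall>p\<in>P. weakly_regular_pt P Opens p) \<and> strongly_compatible_semiframe Opens"
    using all_reg_sc[OF assms] unfolding regular_pt_def weakly_regular_pt_def by blast
  moreover have "(\<forall>p\<in>P. weakly_regular_pt P Opens p) \<and> strongly_compatible_semiframe Opens
      \<Longrightarrow> (\<forall>p\<in>P. regular_pt P Opens p)"
    using one nbhd_abstract[OF assms]
    unfolding strongly_compatible_semiframe_def strongly_compatible_pt_def by blast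
  ultimately show ?thesis using one by blast
qed

end
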